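(* Let $G$ be a locally compact, $\sigma$-compact topological group, regarded as a large scale group whose bornology consists of all pre-compact subsets of $G$. If $G$ is not compactly generated, then either $G$ has exactly one end or $G$ has infinitely many ends.
   Context: A large scale group is a group $G$ with a bornology $\mathcal B$ (a cover closed under subsets and finite unions) closed under inverses and products; uniformly bounded covers are those refining $\{gB\}_{g\in G}$ for some $B\in\mathcal B$; bounded sets are members of $\mathcal B$. Here $\mathcal B$ is the family of subsets of compact subsets of $G$. For $A\subseteq G$ and a cover $\mathcal U$, $st(A,\mathcal U)$ is the union of members of $\mathcal U$ meeting $A$; $A$ is coarsely clopen if $st(A,\mathcal U)\cap st(G\setminus A,\mathcal U)$ is bounded for every uniformly bounded $\mathcal U$. An end of $G$ is a family of unbounded coarsely clopen sets maximal with respect to all finite intersections being unbounded. *)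

theory Defs
  imports "HOL-Analysis.Analysis"
begin

text \<open>A topological group is modelled by a type of class topological_group_add
  (group written additively, not necessarily commutative).\<close>

definition ls_bounded :: "'a::topological_space set \<Rightarrow> bool" where
  "ls_bounded A \<longleftrightarrow> (\<exists>K. compact K \<and> A \<subseteq> K)"

definition ltrans :: "'a::plus \<Rightarrow> 'a set \<Rightarrow> 'a set" where
  "ltrans g B = (\<lambda>b. g + b) ` B"

definition unif_bounded_cover :: "'a::{topological_space,plus} set set \<Rightarrow> bool" where
  "unif_bounded_cover \<U> \<longleftrightarrow> \<Union>\<U> = UNIV \<and>
     (\<exists>B. ls_bounded B \<and> (\<forall>U\<in>\<U>. \<exists>g. U \<subseteq> ltrans g B))"

definition star :: "'a set \<Rightarrow> 'a set set \<Rightarrow> 'a set" where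
  "star A \<U> = \<Union>{U\<in>\<U>. U \<inter> A \<noteq> {}}"

definition coarsely_clopen :: "'a::{topological_space,plus} set \<Rightarrow> bool" where
  "coarsely_clopen A \<longleftrightarrow>
     (\<forall>\<U>. unif_bounded_cover \<U> \<longrightarrow> ls_bounded (star A \<U> \<inter> star (- A) \<U>))"

definition end_family :: "'a::{topological_space,plus} set set \<Rightarrow> bool" where
  "end_family E \<longleftrightarrow> (\<forall>A\<in>E. coarsely_clopen A \<and> \<not> ls_bounded A) \<and>
     (\<forall>F. F \<subseteq> E \<and> finite F \<and> F \<noteq> {} \<longrightarrow> \<not> ls_bounded (\<Inter>F))"

definition is_end :: "'a::{topological_space,plus} set set \<Rightarrow> bool" where
  "is_end E \<longleftrightarrow> end_family E \<and> (\<forall>E'. end_family E' \<and> E \<subseteq> E' \<longrightarrow> E' = E)"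

definition add_subgroup :: "'a::group_add set \<Rightarrow> bool" where
  "add_subgroup H \<longleftrightarrow> 0 \<in> H \<and> (\<forall>x\<in>H. \<forall>y\<in>H. x + y \<in> H) \<and> (\<forall>x\<in>H. - x \<in> H)"

definition generated_subgroup :: "'a::group_add set \<Rightarrow> 'a set" where
  "generated_subgroup S = \<Inter>{H. add_subgroup H \<and> S \<subseteq> H}"

definition compactly_generated :: "'a::topological_group_add itself \<Rightarrow> bool" where
  "compactly_generated _ \<longleftrightarrow> (\<exists>K::'a set. compact K \<and> generated_subgroup K = UNIV)"

definition sigma_compact :: "'a::topological_space itself \<Rightarrow> bool" where
  "sigma_compact _ \<longleftrightarrow> (\<exists>\<K>::'a set set. countable \<K> \<and> (\<forall>K\<in>\<K>. compact K) \<and> \<Union>\<K> = UNIV)"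

end

theory Submission
  imports Defs
begin

lemma bnd_subset: "ls_bounded B \<Longrightarrow> A \<subseteq> B \<Longrightarrow> ls_bounded A"
  unfolding ls_bounded_def by blast

lemma bnd_Un: "ls_bounded A \<Longrightarrow> ls_bounded B \<Longrightarrow> ls_bounded (A \<union> B)"
  unfolding ls_bounded_def by (meson Un_mono compact_Un)

lemma bnd_empty: "ls_bounded {}"
  unfolding ls_bounded_def by blast

lemma compact_ltrans:
  fixes K :: "'a::topological_group_add set"
  shows "compact K \<Longrightarrow> compact (ltrans g K)"
  unfolding ltrans_def
  by (intro compact_continuous_image continuous_intros)

lemma bnd_ltrans:
  fixes B :: "'a::topological_group_add set"
  shows "ls_bounded B \<Longrightarrow> ls_bounded (ltrans g B)"
proof -
  assume "ls_bounded B"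
  then obtain K where "compact K" "B \<subseteq> K" unfolding ls_bounded_def by blast
  then have "compact (ltrans g K)" "ltrans g B \<subseteq> ltrans g K"
    using compact_ltrans unfolding ltrans_def by auto
  then show ?thesis unfolding ls_bounded_def by blast
qed

lemma ltrans_ltrans: "ltrans g (ltrans h B) = ltrans (g + h) (B::'a::group_add set)"
  unfolding ltrans_def by (auto simp: image_image add.assoc)

lemma ltrans_0[simp]: "ltrans 0 (B::'a::group_add set) = B"
  unfolding ltrans_def by simp

lemma mem_ltrans: "x \<in> ltrans g B \<longleftrightarrow> -g + x \<in> (B::'a::group_add set)"
  unfolding ltrans_def by (metis add_minus_cancel image_iff minus_add_cancel)

lemma ltrans_Compl: "ltrans g (- B) = - ltrans g (B::'a::group_add set)"
  by (auto simp: mem_ltrans)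

lemma ltrans_Int: "ltrans g (A \<inter> B) = ltrans g A \<inter> ltrans g (B::'a::group_add set)"
  by (auto simp: mem_ltrans)

lemma ltrans_Un: "ltrans g (A \<union> B) = ltrans g A \<union> ltrans g (B::'a::group_add set)"
  by (auto simp: mem_ltrans)

lemma ltrans_Diff: "ltrans g (A - B) = ltrans g A - ltrans g (B::'a::group_add set)"
  by (auto simp: mem_ltrans)

lemma bnd_ltrans_iff:
  fixes B :: "'a::topological_group_add set"
  shows "ls_bounded (ltrans g B) \<longleftrightarrow> ls_bounded B"
proof
  assume "ls_bounded (ltrans g B)"
  then have "ls_bounded (ltrans (-g) (ltrans g B))" by (rule bnd_ltrans)
  then show "ls_bounded B" by (simp add: ltrans_ltrans)
qed (rule bnd_ltrans)

lemma cc_Compl: "coarsely_clopen A \<Longrightarrow> coarsely_clopen (- A)"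
  unfolding coarsely_clopen_def by (simp add: Int_commute)

lemma cc_UNIV: "coarsely_clopen UNIV"
  unfolding coarsely_clopen_def star_def by (simp add: bnd_empty)

lemma star_mono: "A \<subseteq> B \<Longrightarrow> star A U \<subseteq> star B U"
  unfolding star_def by blast

lemma cc_Int:
  assumes "coarsely_clopen A" "coarsely_clopen B"
  shows "coarsely_clopen (A \<inter> B)"
  unfolding coarsely_clopen_def
proof (intro allI impI)
  fix \<U> :: "'a set set" assume u: "unif_bounded_cover \<U>"
  have "star (A \<inter> B) \<U> \<inter> star (- (A \<inter> B)) \<U> \<subseteq>
        (star A \<U> \<inter> star (- A) \<U>) \<union> (star B \<U> \<inter> star (- B) \<U>)"
    unfolding star_def by blast
  then show "ls_bounded (star (A \<inter> B) \<U> \<inter> star (- (A \<inter> B)) \<U>)"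
    using assms u unfolding coarsely_clopen_def by (meson bnd_Un bnd_subset)
qed

lemma cc_Diff: "coarsely_clopen A \<Longrightarrow> coarsely_clopen B \<Longrightarrow> coarsely_clopen (A - B)"
  by (metis Diff_eq cc_Compl cc_Int)

lemma cc_ltrans:
  fixes A :: "'a::topological_group_add set"
  assumes "coarsely_clopen A"
  shows "coarsely_clopen (ltrans g A)"
  unfolding coarsely_clopen_def
proof (intro allI impI)
  fix \<U> :: "'a set set" assume u: "unif_bounded_cover \<U>"
  define \<V> where "\<V> = ltrans (-g) ` \<U>"
  have v: "unif_bounded_cover \<V>"
  proof -
    from u obtain B where B: "ls_bounded B" "\<forall>U\<in>\<U>. \<exists>h. U \<subseteq> ltrans h B" "\<Union>\<U> = UNIV"
      unfolding unif_bounded_cover_def by blast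
    have "\<Union>\<V> = UNIV"
    proof -
      { fix x
        have "g + x \<in> \<Union>\<U>" using B by simp
        then obtain U where "U \<in> \<U>" "g + x \<in> U" by blast
        then have "x \<in> \<Union>\<V>" unfolding \<V>_def by (auto simp: mem_ltrans) }
      then show ?thesis by blast
    qed
    moreover have "\<forall>V\<in>\<V>. \<exists>h. V \<subseteq> ltrans h B"
    proof
      fix V assume "V \<in> \<V>"
      then obtain U where U: "U \<in> \<U>" "V = ltrans (-g) U" unfolding \<V>_def by blast
      then obtain h where "U \<subseteq> ltrans h B" using B by blast
      then have "V \<subseteq> ltrans (-g + h) B" using U
        by (metis image_mono ltrans_def ltrans_ltrans)
      then show "\<exists>h. V \<subseteq> ltrans h B" by blast
    qed
    ultimately show ?thesis using B unfolding unif_bounded_cover_def by blast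
  qed
  have "star (ltrans g A) \<U> \<inter> star (- ltrans g A) \<U> \<subseteq> ltrans g (star A \<V> \<inter> star (- A) \<V>)"
  proof
    fix x assume "x \<in> star (ltrans g A) \<U> \<inter> star (- ltrans g A) \<U>"
    then obtain U1 U2 where U: "U1 \<in> \<U>" "U2 \<in> \<U>" "x \<in> U1" "x \<in> U2"
      "U1 \<inter> ltrans g A \<noteq> {}" "U2 \<inter> - ltrans g A \<noteq> {}"
      unfolding star_def by blast
    have "ltrans (-g) U1 \<in> \<V>" "ltrans (-g) U2 \<in> \<V>" using U unfolding \<V>_def by auto
    moreover have "-g + x \<in> ltrans (-g) U1" "-g + x \<in> ltrans (-g) U2"
      using U by (auto simp: mem_ltrans)
    moreover have "ltrans (-g) U1 \<inter> A \<noteq> {}"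
    proof -
      obtain a where a: "a \<in> A" "g + a \<in> U1" using U(5) unfolding ltrans_def by blast
      then have "-g + (g + a) \<in> ltrans (-g) U1" unfolding ltrans_def by blast
      then have "a \<in> ltrans (-g) U1" by (simp add: add.assoc[symmetric])
      then show ?thesis using a by blast
    qed
    moreover have "ltrans (-g) U2 \<inter> - A \<noteq> {}"
    proof -
      obtain y where y: "y \<in> U2" "y \<notin> ltrans g A" using U(6) by blast
      then have "-g + y \<in> ltrans (-g) U2" unfolding ltrans_def by blast
      moreover have "-g + y \<notin> A" using y(2) by (simp add: mem_ltrans)
      ultimately show ?thesis by blast
    qed
    ultimately have "-g + x \<in> star A \<V> \<inter> star (- A) \<V>"
      unfolding star_def by blast
    then show "x \<in> ltrans g (star A \<V> \<inter> star (- A) \<V>)"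
      by (simp add: mem_ltrans)
  qed
  moreover have "ls_bounded (star A \<V> \<inter> star (- A) \<V>)"
    using assms v unfolding coarsely_clopen_def by blast
  ultimately show "ls_bounded (star (ltrans g A) \<U> \<inter> star (- ltrans g A) \<U>)"
    by (meson bnd_ltrans bnd_subset)
qed


lemma end_family_Union_chain:
  assumes C: "C \<in> chains {E. end_family E \<and> A \<in> E}" and ne: "C \<noteq> {}"
  shows "end_family (\<Union>C)"
proof -
  have 1: "\<forall>X\<in>\<Union>C. coarsely_clopen X \<and> \<not> ls_bounded X"
  proof
    fix X assume "X \<in> \<Union>C"
    then obtain E where E: "E \<in> C" "X \<in> E" by blast
    then have "end_family E" using C unfolding chains_def by blast
    then show "coarsely_clopen X \<and> \<not> ls_bounded X"
      using E unfolding end_family_def by blast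
  qed
  have 2: "\<forall>F. F \<subseteq> \<Union>C \<and> finite F \<and> F \<noteq> {} \<longrightarrow> \<not> ls_bounded (\<Inter>F)"
  proof (intro allI impI)
    fix F assume F: "F \<subseteq> \<Union>C \<and> finite F \<and> F \<noteq> {}"
    have sc: "subset.chain {E. end_family E \<and> A \<in> E} C" using C by (simp add: chains_alt_def)
    obtain E where E: "E \<in> C" "F \<subseteq> E"
      using finite_subset_Union_chain[of F C, OF _ _ ne sc] F by blast
    then have "end_family E" using C unfolding chains_def by blast
    then show "\<not> ls_bounded (\<Inter>F)"
      using E F unfolding end_family_def by blast
  qed
  show ?thesis unfolding end_family_def using 1 2 by (rule conjI)
qed

lemma exists_end:
  assumes "coarsely_clopen A" "\<not> ls_bounded A"
  shows "\<exists>E. is_end E \<and> A \<in> E"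
proof -
  let ?S = "{E. end_family E \<and> A \<in> E}"
  have "\<forall>C\<in>chains ?S. \<exists>U\<in>?S. \<forall>X\<in>C. X \<subseteq> U"
  proof
    fix C assume C: "C \<in> chains ?S"
    show "\<exists>U\<in>?S. \<forall>X\<in>C. X \<subseteq> U"
    proof (cases "C = {}")
      case True
      have "end_family {A}"
        unfolding end_family_def using assms
        by (auto simp: subset_singleton_iff)
      then show ?thesis using True by auto
    next
      case False
      then obtain E where "E \<in> C" by blast
      then have "A \<in> \<Union>C" using C unfolding chains_def by blast
      then show ?thesis using end_family_Union_chain[OF C False] by blast
    qed
  qed
  then obtain M where M: "M \<in> ?S" "\<forall>X\<in>?S. M \<subseteq> X \<longrightarrow> X = M"
    using Zorn_Lemma2[of ?S] by blast
  have "is_end M"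
    unfolding is_end_def using M by blast
  then show ?thesis using M by blast
qed

lemma absorb:
  assumes E: "is_end E" and X: "coarsely_clopen X" "\<not> ls_bounded X"
    and int: "\<And>F. F \<subseteq> E \<Longrightarrow> finite F \<Longrightarrow> F \<noteq> {} \<Longrightarrow> \<not> ls_bounded (\<Inter>F \<inter> X)"
  shows "X \<in> E"
proof -
  have ef: "end_family E" using E unfolding is_end_def by blast
  have 1: "\<forall>Y\<in>insert X E. coarsely_clopen Y \<and> \<not> ls_bounded Y"
    using ef X unfolding end_family_def by blast
  have 2: "\<forall>F. F \<subseteq> insert X E \<and> finite F \<and> F \<noteq> {} \<longrightarrow> \<not> ls_bounded (\<Inter>F)"
  proof (intro allI impI)
    fix F assume F: "F \<subseteq> insert X E \<and> finite F \<and> F \<noteq> {}"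
    show "\<not> ls_bounded (\<Inter>F)"
    proof (cases "X \<in> F")
      case False
      then have "F \<subseteq> E" using F by blast
      then show ?thesis using ef F unfolding end_family_def by blast
    next
      case True
      show ?thesis
      proof (cases "F - {X} = {}")
        case True
        then have "F = {X}" using \<open>X \<in> F\<close> by blast
        then show ?thesis using X by simp
      next
        case False
        have "\<Inter>F = \<Inter>(F - {X}) \<inter> X" using True by blast
        moreover have "F - {X} \<subseteq> E" "finite (F - {X})" using F by auto
        ultimately show ?thesis using int[of "F - {X}"] False by simp
      qed
    qed
  qed
  have "end_family (insert X E)" unfolding end_family_def using 1 2 by (rule conjI)
  then show ?thesis using E unfolding is_end_def by blast
qed

lemma end_two:
  assumes "is_end E" "X \<in> E" "Y \<in> E"
  shows "\<not> ls_bounded (X \<inter> Y)"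
proof -
  have ef: "end_family E" using assms(1) unfolding is_end_def by blast
  have "{X, Y} \<subseteq> E" "finite {X, Y}" "{X, Y} \<noteq> {}" using assms by auto
  then have "\<not> ls_bounded (\<Inter>{X, Y})"
    using ef unfolding end_family_def by blast
  then show ?thesis by simp
qed

lemma separate:
  assumes X: "coarsely_clopen X" and Y: "coarsely_clopen Y" and nb: "\<not> ls_bounded (X - Y)"
  shows "\<exists>E. is_end E \<and> X \<in> E \<and> Y \<notin> E"
proof -
  obtain E where E: "is_end E" "X - Y \<in> E"
    using exists_end[OF cc_Diff[OF X Y] nb] by blast
  have ef: "end_family E" using E unfolding is_end_def by blast
  have "X \<in> E"
  proof (rule absorb[OF E(1) X])
    show "\<not> ls_bounded X" using nb by (meson Diff_subset bnd_subset)
  next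
    fix F assume F: "F \<subseteq> E" "finite F" "F \<noteq> {}"
    have "insert (X - Y) F \<subseteq> E" "finite (insert (X - Y) F)" "insert (X - Y) F \<noteq> {}"
      using F E by auto
    then have "\<not> ls_bounded (\<Inter>(insert (X - Y) F))"
      using ef unfolding end_family_def by blast
    moreover have "\<Inter>(insert (X - Y) F) \<subseteq> \<Inter>F \<inter> X" by blast
    ultimately show "\<not> ls_bounded (\<Inter>F \<inter> X)" by (meson bnd_subset)
  qed
  moreover have "Y \<notin> E"
  proof
    assume "Y \<in> E"
    then have "\<not> ls_bounded ((X - Y) \<inter> Y)" using end_two[OF E(1) E(2)] by blast
    moreover have "(X - Y) \<inter> Y = {}" by blast
    ultimately show False by (metis bnd_empty)
  qed
  ultimately show ?thesis using E by blast
qed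

lemma infinite_ends:
  fixes f :: "nat \<Rightarrow> 'a::{topological_space,plus} set"
  assumes cc: "\<And>n. coarsely_clopen (f n)" and nb: "\<And>n. \<not> ls_bounded (f n)"
    and dj: "\<And>m n. m \<noteq> n \<Longrightarrow> ls_bounded (f m \<inter> f n)"
  shows "infinite {E :: 'a set set. is_end E}"
proof -
  have "\<forall>n. \<exists>E. is_end E \<and> f n \<in> E"
  proof
    fix n show "\<exists>E. is_end E \<and> f n \<in> E" by (rule exists_end[OF cc nb])
  qed
  then obtain e where e: "\<And>n. is_end (e n) \<and> f n \<in> e n" by metis
  have "inj e"
  proof (rule injI)
    fix m n assume en: "e m = e n"
    show "m = n"
    proof (rule ccontr)
      assume "m \<noteq> n"
      have "f m \<in> e n" "f n \<in> e n" using e[of m] e[of n] en by auto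
      then have "\<not> ls_bounded (f m \<inter> f n)" using end_two e[of n] by blast
      then show False using dj[OF \<open>m \<noteq> n\<close>] by blast
    qed
  qed
  then have "infinite (range e)" by (rule range_inj_infinite)
  moreover have "range e \<subseteq> {E. is_end E}" using e by blast
  ultimately show ?thesis by (meson finite_subset)
qed

lemma exists_end_UNIV:
  assumes "\<not> ls_bounded (UNIV :: 'a::{topological_space,plus} set)"
  shows "\<exists>E :: 'a set set. is_end E"
  using exists_end[OF cc_UNIV assms] by blast


lemma gs_subgroup: "add_subgroup (generated_subgroup S)"
  unfolding generated_subgroup_def add_subgroup_def by blast

lemma gs_sub: "S \<subseteq> generated_subgroup S"
  unfolding generated_subgroup_def by blast

lemma gs_least: "add_subgroup H \<Longrightarrow> S \<subseteq> H \<Longrightarrow> generated_subgroup S \<subseteq> H"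
  unfolding generated_subgroup_def by blast

lemma gs_mono: "S \<subseteq> T \<Longrightarrow> generated_subgroup S \<subseteq> generated_subgroup T"
proof -
  assume "S \<subseteq> T"
  then have "S \<subseteq> generated_subgroup T" using gs_sub by blast
  then show ?thesis using gs_least gs_subgroup by blast
qed

lemma sg_add: "add_subgroup H \<Longrightarrow> x \<in> H \<Longrightarrow> y \<in> H \<Longrightarrow> x + y \<in> H"
  unfolding add_subgroup_def by blast
lemma sg_minus: "add_subgroup H \<Longrightarrow> x \<in> H \<Longrightarrow> - x \<in> H"
  unfolding add_subgroup_def by blast
lemma sg_0: "add_subgroup H \<Longrightarrow> 0 \<in> H"
  unfolding add_subgroup_def by blast

lemma noncg:
  fixes K :: "'a::topological_group_add set"
  assumes "\<not> compactly_generated TYPE('a)" "compact K"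
  shows "generated_subgroup K \<noteq> UNIV"
  using assms unfolding compactly_generated_def by blast

lemma noncg_unbounded:
  assumes "\<not> compactly_generated TYPE('a::topological_group_add)"
  shows "\<not> ls_bounded (UNIV :: 'a set)"
proof
  assume "ls_bounded (UNIV :: 'a set)"
  then obtain K :: "'a set" where "compact K" "UNIV \<subseteq> K" unfolding ls_bounded_def by blast
  then have "K = UNIV" by blast
  then have "compact (UNIV :: 'a set)" using \<open>compact K\<close> by simp
  moreover have "generated_subgroup (UNIV :: 'a set) = UNIV" using gs_sub by blast
  ultimately show False using assms unfolding compactly_generated_def by blast
qed

definition symd :: "'a set \<Rightarrow> 'a set \<Rightarrow> 'a set" where
  "symd X Y = (X - Y) \<union> (Y - X)"

definition stab :: "'a::topological_group_add set \<Rightarrow> 'a set" where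
  "stab A = {g. ls_bounded (symd (ltrans g A) A)}"

lemma symd_commute: "symd X Y = symd Y X"
  unfolding symd_def by blast

lemma symd_trans: "symd X Z \<subseteq> symd X Y \<union> symd Y Z"
  unfolding symd_def by blast

lemma ltrans_symd: "ltrans g (symd X Y) = symd (ltrans g X) (ltrans g (Y::'a::group_add set))"
  unfolding symd_def by (simp add: ltrans_Un ltrans_Diff)

lemma symd_Compl: "symd (- X) (- Y) = symd X Y"
  unfolding symd_def by blast

lemma stab_0: "0 \<in> stab A"
  unfolding stab_def symd_def by (simp add: bnd_empty)

lemma stab_add:
  assumes "g \<in> stab A" "h \<in> stab A"
  shows "g + h \<in> stab A"
proof -
  have "symd (ltrans (g + h) A) A \<subseteq> symd (ltrans g (ltrans h A)) (ltrans g A) \<union> symd (ltrans g A) A"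
    by (metis ltrans_ltrans symd_trans)
  also have "\<dots> = ltrans g (symd (ltrans h A) A) \<union> symd (ltrans g A) A"
    by (simp add: ltrans_symd)
  finally have sub: "symd (ltrans (g + h) A) A \<subseteq> ltrans g (symd (ltrans h A) A) \<union> symd (ltrans g A) A" .
  have "ls_bounded (symd (ltrans h A) A)" "ls_bounded (symd (ltrans g A) A)"
    using assms unfolding stab_def by auto
  then have "ls_bounded (ltrans g (symd (ltrans h A) A) \<union> symd (ltrans g A) A)"
    using bnd_Un bnd_ltrans by blast
  then show ?thesis using sub bnd_subset unfolding stab_def by blast
qed

lemma stab_minus:
  assumes "g \<in> stab A"
  shows "- g \<in> stab A"
proof -
  have "symd (ltrans (- g) A) A = ltrans (-g) (symd A (ltrans g A))"
    by (simp add: ltrans_symd ltrans_ltrans)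
  also have "\<dots> = ltrans (-g) (symd (ltrans g A) A)" by (simp add: symd_commute)
  finally show ?thesis using assms unfolding stab_def by (simp add: bnd_ltrans_iff)
qed

lemma stab_Compl: "stab (- A) = stab A"
  unfolding stab_def by (simp add: ltrans_Compl symd_Compl)

lemma finite_index:
  fixes A :: "'a::topological_group_add set"
  assumes fin: "finite {E :: 'a set set. is_end E}" and cc: "coarsely_clopen A"
  shows "\<exists>T. finite T \<and> (\<forall>x. \<exists>t\<in>T. \<exists>s\<in>stab A. x = t + s)"
proof -
  define \<phi> where "\<phi> g = {E \<in> {E :: 'a set set. is_end E}. ltrans g A \<in> E}" for g
  have "range \<phi> \<subseteq> Pow {E :: 'a set set. is_end E}" unfolding \<phi>_def by blast
  moreover have "finite (Pow {E :: 'a set set. is_end E})" using fin by simp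
  ultimately have finr: "finite (range \<phi>)" by (rule finite_subset)
  define T where "T = (\<lambda>v. SOME g. \<phi> g = v) ` range \<phi>"
  have "finite T" unfolding T_def using finr by simp
  moreover have "\<forall>x. \<exists>t\<in>T. \<exists>s\<in>stab A. x = t + s"
  proof
    fix x
    define t where "t = (SOME g. \<phi> g = \<phi> x)"
    have tT: "t \<in> T" unfolding T_def t_def by blast
    have pt: "\<phi> t = \<phi> x" unfolding t_def by (rule someI) (rule refl)
    have ccx: "coarsely_clopen (ltrans x A)" "coarsely_clopen (ltrans t A)"
      using cc cc_ltrans by blast+
    have b1: "ls_bounded (ltrans x A - ltrans t A)"
    proof (rule ccontr)
      assume "\<not> ls_bounded (ltrans x A - ltrans t A)"
      then obtain E where "is_end E" "ltrans x A \<in> E" "ltrans t A \<notin> E"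
        using separate[OF ccx] by blast
      then have "E \<in> \<phi> x" "E \<notin> \<phi> t" unfolding \<phi>_def by auto
      then show False using pt by simp
    qed
    have b2: "ls_bounded (ltrans t A - ltrans x A)"
    proof (rule ccontr)
      assume "\<not> ls_bounded (ltrans t A - ltrans x A)"
      then obtain E where "is_end E" "ltrans t A \<in> E" "ltrans x A \<notin> E"
        using separate[OF ccx(2) ccx(1)] by blast
      then have "E \<in> \<phi> t" "E \<notin> \<phi> x" unfolding \<phi>_def by auto
      then show False using pt by simp
    qed
    have "ls_bounded (symd (ltrans x A) (ltrans t A))"
      unfolding symd_def using b1 b2 by (rule bnd_Un)
    then have "ls_bounded (ltrans (-t) (symd (ltrans x A) (ltrans t A)))" by (rule bnd_ltrans)
    then have "-t + x \<in> stab A" unfolding stab_def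
      by (simp add: ltrans_symd ltrans_ltrans)
    moreover have "x = t + (-t + x)" by (simp add: add.assoc[symmetric])
    ultimately show "\<exists>t\<in>T. \<exists>s\<in>stab A. x = t + s" using tT by blast
  qed
  ultimately show ?thesis by blast
qed

lemma right_index:
  fixes A :: "'a::topological_group_add set"
  assumes "finite T" "\<forall>x. \<exists>t\<in>T. \<exists>s\<in>stab A. x = t + s"
  shows "finite (uminus ` T) \<and> (\<forall>z. \<exists>n\<in>stab A. \<exists>r\<in>uminus ` T. z = n + r)"
proof -
  have "\<forall>z. \<exists>n\<in>stab A. \<exists>r\<in>uminus ` T. z = n + r"
  proof
    fix z
    obtain t s where ts: "t \<in> T" "s \<in> stab A" "- z = t + s" using assms(2) by blast
    then have "z = - (t + s)" by (metis minus_minus)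
    then have "z = - s + - t" by (simp add: minus_add)
    then show "\<exists>n\<in>stab A. \<exists>r\<in>uminus ` T. z = n + r" using ts stab_minus by blast
  qed
  then show ?thesis using assms(1) by blast
qed


lemma caseA:
  fixes X :: "'a::topological_group_add set"
  assumes ncg: "\<not> compactly_generated TYPE('a)"
    and L: "compact L" and C: "compact C" and R: "R \<subseteq> L"
    and cov: "\<forall>z. \<exists>n\<in>stab X. \<exists>r\<in>R. z = n + r"
    and sub: "X \<subseteq> generated_subgroup (L \<union> C)" and nb: "\<not> ls_bounded X"
  shows False
proof -
  let ?H = "generated_subgroup (L \<union> C)"
  have sg: "add_subgroup ?H" by (rule gs_subgroup)
  have LH: "L \<subseteq> ?H" using gs_sub by blast
  have "\<not> stab X \<subseteq> ?H"
  proof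
    assume st: "stab X \<subseteq> ?H"
    have "?H = UNIV"
    proof -
      { fix z
        obtain n r where "n \<in> stab X" "r \<in> R" "z = n + r" using cov by blast
        then have "z \<in> ?H" using st R LH sg_add[OF sg] by blast }
      then show ?thesis by blast
    qed
    moreover have "compact (L \<union> C)" using L C by blast
    ultimately show False using noncg[OF ncg] by blast
  qed
  then obtain g where g: "g \<in> stab X" "g \<notin> ?H" by blast
  have "X \<subseteq> symd (ltrans g X) X"
  proof
    fix x assume x: "x \<in> X"
    have "x \<notin> ltrans g X"
    proof
      assume "x \<in> ltrans g X"
      then have "-g + x \<in> X" by (simp add: mem_ltrans)
      then have "-g + x \<in> ?H" using sub by blast
      then have "x + - (-g + x) \<in> ?H" using x sub sg_add[OF sg] sg_minus[OF sg] by blast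
      moreover have "x + - (-g + x) = g" by (simp add: minus_add add.assoc[symmetric])
      ultimately show False using g by simp
    qed
    then show "x \<in> symd (ltrans g X) X" unfolding symd_def using x by blast
  qed
  moreover have "ls_bounded (symd (ltrans g X) X)" using g unfolding stab_def by blast
  ultimately show False using nb bnd_subset by blast
qed

lemma caseII:
  fixes A :: "'a::topological_group_add set"
  assumes ncg: "\<not> compactly_generated TYPE('a)"
    and L: "compact L" and Hnb: "\<not> ls_bounded (generated_subgroup L)"
    and cc: "coarsely_clopen A" and nbA: "\<not> ls_bounded A" and nbC: "\<not> ls_bounded (- A)"
    and R: "R \<subseteq> L" and cov: "\<forall>z. \<exists>n\<in>stab A. \<exists>r\<in>R. z = n + r"
  shows False
proof -
  define H where "H = generated_subgroup L"
  have sg: "add_subgroup H" unfolding H_def by (rule gs_subgroup)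
  have LH: "L \<subseteq> H" unfolding H_def by (rule gs_sub)
  define L' where "L' = insert 0 L"
  define \<U> where "\<U> = range (\<lambda>x. ltrans x L')"
  have xU: "x \<in> ltrans x L'" for x unfolding L'_def ltrans_def by force
  have ubc: "unif_bounded_cover \<U>"
  proof -
    have "\<Union>\<U> = UNIV" unfolding \<U>_def using xU by blast
    moreover have "compact L'" unfolding L'_def using L by simp
    then have "ls_bounded L'" unfolding ls_bounded_def by blast
    moreover have "\<forall>U\<in>\<U>. \<exists>g. U \<subseteq> ltrans g L'" unfolding \<U>_def by blast
    ultimately show ?thesis unfolding unif_bounded_cover_def by blast
  qed
  obtain C where C: "compact C" "star A \<U> \<inter> star (- A) \<U> \<subseteq> C"
    using cc ubc unfolding coarsely_clopen_def ls_bounded_def by blast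
  define pure where "pure x \<longleftrightarrow> (\<forall>h\<in>H. x + h \<notin> C)" for x
  have pure_shift: "pure (x + h)" if px: "pure x" and hH: "h \<in> H" for x h
    unfolding pure_def
  proof
    fix h' assume h': "h' \<in> H"
    have "h + h' \<in> H" using sg_add[OF sg hH h'] .
    then have "x + (h + h') \<notin> C" using px unfolding pure_def by blast
    then show "x + h + h' \<notin> C" by (simp add: add.assoc)
  qed
  have stepL: "x \<in> A \<longleftrightarrow> x + l \<in> A" if "pure x" "l \<in> L" for x l
  proof (rule ccontr)
    assume ne: "(x \<in> A) \<noteq> (x + l \<in> A)"
    let ?U = "ltrans x L'"
    have U: "?U \<in> \<U>" unfolding \<U>_def by blast
    have xl: "x + l \<in> ?U" using that unfolding L'_def ltrans_def by blast
    have "?U \<inter> A \<noteq> {}" "?U \<inter> - A \<noteq> {}" using ne xU[of x] xl by auto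
    then have "x \<in> star A \<U> \<inter> star (- A) \<U>" using U xU[of x] unfolding star_def by blast
    then have "x \<in> C" using C by blast
    then have "x + 0 \<in> C" by simp
    then show False using that sg_0[OF sg] unfolding pure_def by blast
  qed
  define P where "P = {h \<in> H. \<forall>x. pure x \<longrightarrow> (x \<in> A \<longleftrightarrow> x + h \<in> A)}"
  have sgP: "add_subgroup P"
    unfolding add_subgroup_def
  proof (intro conjI ballI)
    show "0 \<in> P" unfolding P_def using sg_0[OF sg] by simp
  next
    fix a b assume a: "a \<in> P" and b: "b \<in> P"
    have "a + b \<in> H" using a b sg_add[OF sg] unfolding P_def by blast
    moreover have "pure x \<longrightarrow> (x \<in> A \<longleftrightarrow> x + (a + b) \<in> A)" for x
    proof
      assume px: "pure x"
      have ah: "a \<in> H" using a unfolding P_def by blast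
      have "x \<in> A \<longleftrightarrow> x + a \<in> A" using a px unfolding P_def by blast
      also have "\<dots> \<longleftrightarrow> x + a + b \<in> A" using b pure_shift[OF px ah] unfolding P_def by blast
      finally show "x \<in> A \<longleftrightarrow> x + (a + b) \<in> A" by (simp add: add.assoc)
    qed
    ultimately show "a + b \<in> P" unfolding P_def by blast
  next
    fix a assume a: "a \<in> P"
    have ah: "a \<in> H" using a unfolding P_def by blast
    have "- a \<in> H" using sg_minus[OF sg ah] .
    moreover have "pure x \<longrightarrow> (x \<in> A \<longleftrightarrow> x + - a \<in> A)" for x
    proof
      assume px: "pure x"
      have p2: "pure (x + - a)" using pure_shift[OF px \<open>- a \<in> H\<close>] .
      have "x + - a \<in> A \<longleftrightarrow> x + - a + a \<in> A" using a p2 unfolding P_def by blast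
      then show "x \<in> A \<longleftrightarrow> x + - a \<in> A" by (simp add: add.assoc)
    qed
    ultimately show "- a \<in> P" unfolding P_def by blast
  qed
  have "L \<subseteq> P"
  proof
    fix l assume l: "l \<in> L"
    have "\<forall>x. pure x \<longrightarrow> (x \<in> A \<longleftrightarrow> x + l \<in> A)" using stepL l by blast
    then show "l \<in> P" unfolding P_def using l LH by blast
  qed
  then have HP: "H \<subseteq> P" unfolding H_def using gs_least[OF sgP] by blast
  have purity: "x \<in> A \<longleftrightarrow> x + h \<in> A" if "pure x" "h \<in> H" for x h
    using that HP unfolding P_def by blast
  have claim: False if x: "pure x" "x \<in> A" and y: "pure y" "y \<notin> A" and g: "y + - x \<in> stab A" for x y
  proof -
    let ?g = "y + - x"
    obtain D where D: "compact D" "symd (ltrans ?g A) A \<subseteq> D"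
      using g unfolding stab_def ls_bounded_def by blast
    have "H \<subseteq> ltrans (- y) D"
    proof
      fix h assume h: "h \<in> H"
      have "x + h \<in> A" using purity[OF x(1) h] x(2) by blast
      then have "?g + (x + h) \<in> ltrans ?g A" unfolding ltrans_def by blast
      moreover have "?g + (x + h) = y + h" by (simp add: add.assoc[symmetric])
      moreover have "y + h \<notin> A" using purity[OF y(1) h] y(2) by blast
      ultimately have "y + h \<in> symd (ltrans ?g A) A" unfolding symd_def by auto
      then have "y + h \<in> D" using D by blast
      then show "h \<in> ltrans (- y) D" by (simp add: mem_ltrans)
    qed
    moreover have "ls_bounded (ltrans (- y) D)"
      using D bnd_ltrans unfolding ls_bounded_def by blast
    ultimately show False using Hnb bnd_subset unfolding H_def by blast
  qed
  have RH: "R \<subseteq> H" using R LH by blast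
  have HLC: "H \<subseteq> generated_subgroup (L \<union> C)" unfolding H_def by (rule gs_mono) blast
  have CLC: "C \<subseteq> generated_subgroup (L \<union> C)" using gs_sub by blast
  have sg2: "add_subgroup (generated_subgroup (L \<union> C))" by (rule gs_subgroup)
  have impure_in: "x \<in> generated_subgroup (L \<union> C)" if np: "\<not> pure x" for x
  proof -
    obtain h where h: "h \<in> H" "x + h \<in> C" using np unfolding pure_def by blast
    have "x + h + - h \<in> generated_subgroup (L \<union> C)"
      using h HLC CLC sg_add[OF sg2] sg_minus[OF sg2] by blast
    then show ?thesis by (simp add: add.assoc)
  qed
  show False
  proof (cases "\<exists>x\<in>A. pure x")
    case False
    then have "A \<subseteq> generated_subgroup (L \<union> C)" using impure_in by blast
    then show False using caseA[OF ncg L C(1) R cov _ nbA] by blast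
  next
    case True
    then obtain x where x: "x \<in> A" "pure x" by blast
    show False
    proof (cases "\<exists>y\<in>- A. pure y")
      case False
      then have "- A \<subseteq> generated_subgroup (L \<union> C)" using impure_in by blast
      moreover have "\<forall>z. \<exists>n\<in>stab (- A). \<exists>r\<in>R. z = n + r" using cov by (simp add: stab_Compl)
      ultimately show False using caseA[OF ncg L C(1) R _ _ nbC] by blast
    next
      case True
      then obtain y where y: "y \<notin> A" "pure y" by blast
      obtain n r where nr: "n \<in> stab A" "r \<in> R" "x = n + r" using cov by blast
      obtain n2 r2 where nr2: "n2 \<in> stab A" "r2 \<in> R" "y = n2 + r2" using cov by blast
      have d: "- r + r2 \<in> H" using nr(2) nr2(2) RH sg_add[OF sg] sg_minus[OF sg] by blast
      define x' where "x' = x + (- r + r2)"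
      have x'A: "x' \<in> A" unfolding x'_def using purity[OF x(2) d] x(1) by blast
      have px': "pure x'" unfolding x'_def by (rule pure_shift[OF x(2) d])
      have "x' = n + r2" unfolding x'_def nr(3) by (simp add: add.assoc[symmetric])
      then have "y + - x' = n2 + r2 + (- r2 + - n)" unfolding nr2(3) by (simp only: minus_add)
      also have "\<dots> = n2 + - n" by (simp only: add.assoc add_minus_cancel)
      finally have "y + - x' = n2 + - n" .
      moreover have "n2 + - n \<in> stab A" using nr(1) nr2(1) stab_add stab_minus by blast
      ultimately show False using claim[OF px' x'A y(2) y(1)] by simp
    qed
  qed
qed


primrec chn :: "'a set \<Rightarrow> (nat \<Rightarrow> 'a set) \<Rightarrow> ('a set \<Rightarrow> 'a set) \<Rightarrow> ('a set \<Rightarrow> 'a) \<Rightarrow> nat \<Rightarrow> 'a::group_add set" where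
  "chn K0 k D p 0 = generated_subgroup K0"
| "chn K0 k D p (Suc n) = generated_subgroup (K0 \<union> (k n \<union> D (chn K0 k D p n) \<union> {p (D (chn K0 k D p n))}))"

lemma open_ltrans:
  fixes V :: "'a::topological_group_add set"
  assumes "open V"
  shows "open (ltrans h V)"
proof -
  have "ltrans h V = (\<lambda>x. - h + x) -` V" by (auto simp: mem_ltrans)
  moreover have "continuous_on UNIV (\<lambda>x::'a. - h + x)" by (intro continuous_intros)
  ultimately show ?thesis using assms by (simp add: open_vimage)
qed

lemma open_subgroup:
  fixes H :: "'a::topological_group_add set"
  assumes sg: "add_subgroup H" and V: "open V" "0 \<in> V" "V \<subseteq> H"
  shows "open H"
proof -
  have "H = (\<Union>h\<in>H. ltrans h V)"
  proof
    show "H \<subseteq> (\<Union>h\<in>H. ltrans h V)"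
    proof
      fix h assume "h \<in> H"
      moreover have "h \<in> ltrans h V" using V(2) unfolding ltrans_def by force
      ultimately show "h \<in> (\<Union>h\<in>H. ltrans h V)" by blast
    qed
    show "(\<Union>h\<in>H. ltrans h V) \<subseteq> H"
      using V(3) sg_add[OF sg] unfolding ltrans_def by blast
  qed
  moreover have "open (\<Union>h\<in>H. ltrans h V)" using open_ltrans[OF V(1)] by blast
  ultimately show ?thesis by simp
qed

lemma caseI:
  fixes K0 :: "'a::topological_group_add set"
  assumes ncg: "\<not> compactly_generated TYPE('a)"
    and V: "open V" "0 \<in> V" "V \<subseteq> K0" and K0: "compact K0"
    and sig: "sigma_compact TYPE('a)"
    and bnd: "\<forall>B. compact B \<longrightarrow> ls_bounded (generated_subgroup (K0 \<union> B))"
  shows "infinite {E :: 'a set set. is_end E}"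
proof -
  obtain \<K> :: "'a set set" where K: "countable \<K>" "\<forall>K\<in>\<K>. compact K" "\<Union>\<K> = UNIV"
    using sig unfolding sigma_compact_def by auto
  have Kne: "\<K> \<noteq> {}"
  proof
    assume "\<K> = {}"
    then have "(UNIV :: 'a set) = {}" using K(3) by simp
    then show False by simp
  qed
  define k where "k = from_nat_into \<K>"
  have kK: "k n \<in> \<K>" for n unfolding k_def using Kne by (rule from_nat_into)
  have kc: "compact (k n)" for n using kK K(2) by blast
  have kcov: "\<exists>n. x \<in> k n" for x
  proof -
    have "range k = \<K>" unfolding k_def using range_from_nat_into[OF Kne K(1)] .
    then show ?thesis using K(3) by blast
  qed
  define D where "D X = (SOME D. compact D \<and> X \<subseteq> D)" for X :: "'a set"
  have Dp: "compact (D X) \<and> X \<subseteq> D X" if "ls_bounded X" for X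
    unfolding D_def using that unfolding ls_bounded_def by (rule someI_ex)
  define p where "p X = (SOME x. x \<notin> X)" for X :: "'a set"
  have pp: "p X \<notin> X" if "ls_bounded X" for X
  proof -
    have "X \<noteq> UNIV"
    proof
      assume "X = UNIV"
      then show False using that noncg_unbounded[OF ncg] by simp
    qed
    then have "\<exists>x. x \<notin> X" by blast
    then show ?thesis unfolding p_def by (rule someI_ex)
  qed
  define H where "H = chn K0 k D p"
  have HS: "H (Suc n) = generated_subgroup (K0 \<union> (k n \<union> D (H n) \<union> {p (D (H n))}))" for n
    unfolding H_def by simp
  have Hbnd: "ls_bounded (H n)" for n
  proof (induction n)
    case 0
    have "ls_bounded (generated_subgroup (K0 \<union> {}))" using bnd[rule_format, of "{}"] by simp
    then show ?case unfolding H_def by simp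
  next
    case (Suc n)
    have "compact (k n \<union> D (H n) \<union> {p (D (H n))})"
      using kc Dp[OF Suc] by (intro compact_Un) auto
    then show ?case unfolding HS using bnd by blast
  qed
  have Hsg: "add_subgroup (H n)" for n
    by (cases n) (simp_all add: H_def gs_subgroup)
  have K0H: "K0 \<subseteq> H n" for n
  proof (cases n)
    case 0
    then show ?thesis unfolding H_def by (simp add: gs_sub)
  next
    case (Suc n')
    have "K0 \<subseteq> K0 \<union> (k n' \<union> D (H n') \<union> {p (D (H n'))})" by blast
    also have "\<dots> \<subseteq> H (Suc n')" unfolding HS by (rule gs_sub)
    finally show ?thesis using Suc by simp
  qed
  have Hstep: "H n \<subseteq> H (Suc n)" for n
  proof -
    have "H n \<subseteq> D (H n)" using Dp[OF Hbnd] by blast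
    also have "\<dots> \<subseteq> K0 \<union> (k n \<union> D (H n) \<union> {p (D (H n))})" by blast
    also have "\<dots> \<subseteq> H (Suc n)" unfolding HS by (rule gs_sub)
    finally show ?thesis .
  qed
  have Hmono: "H m \<subseteq> H n" if mn: "m \<le> n" for m n
    by (rule lift_Suc_mono_le[of H, OF Hstep mn])
  define pt where "pt n = p (D (H n))" for n
  have pt1: "pt n \<in> H (Suc n)" for n
  proof -
    have "pt n \<in> K0 \<union> (k n \<union> D (H n) \<union> {p (D (H n))})" unfolding pt_def by blast
    then show ?thesis unfolding HS using gs_sub[of "K0 \<union> (k n \<union> D (H n) \<union> {p (D (H n))})"] by (rule subsetD[rotated])
  qed
  have pt2: "pt n \<notin> H n" for n
  proof -
    have "ls_bounded (D (H n))" using Dp[OF Hbnd[of n]] unfolding ls_bounded_def by blast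
    then have "pt n \<notin> D (H n)" unfolding pt_def by (rule pp)
    then show ?thesis using Dp[OF Hbnd[of n]] by blast
  qed
  have Hcov: "\<exists>n. x \<in> H n" for x
  proof -
    obtain n where "x \<in> k n" using kcov by blast
    moreover have "k n \<subseteq> K0 \<union> (k n \<union> D (H n) \<union> {p (D (H n))})" by blast
    then have "k n \<subseteq> H (Suc n)" unfolding HS using gs_sub by (rule order_trans)
    ultimately show ?thesis by blast
  qed
  have Hopen: "open (H n)" for n
  proof -
    have "V \<subseteq> H n" using V(3) K0H[of n] by blast
    then show ?thesis by (rule open_subgroup[OF Hsg V(1,2)])
  qed
  have cpt_in: "\<exists>m. B \<subseteq> H m" if "compact B" for B
  proof -
    have cv: "B \<subseteq> (\<Union>c\<in>UNIV. H c)" using Hcov by blast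
    have op: "\<And>T. T \<in> UNIV \<Longrightarrow> open (H T)" using Hopen by blast
    have "\<exists>C'. C' \<subseteq> UNIV \<and> finite C' \<and> B \<subseteq> (\<Union>c\<in>C'. H c)"
      by (rule compactE_image[of B UNIV H]) (use that op cv in blast)+
    then obtain C' where C': "C' \<subseteq> UNIV" "finite C'" "B \<subseteq> (\<Union>c\<in>C'. H c)" by blast
    show ?thesis
    proof (cases "C' = {}")
      case True then show ?thesis using C' by auto
    next
      case False
      have "H c \<subseteq> H (Max C')" if "c \<in> C'" for c using Hmono[OF Max_ge[OF C'(2) that]] .
      then have "(\<Union>c\<in>C'. H c) \<subseteq> H (Max C')" by blast
      then show ?thesis using C' by blast
    qed
  qed
  have same: "x + h \<in> H n \<longleftrightarrow> x \<in> H n" if x: "x \<notin> H m" and h: "h \<in> H m" for x h m n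
  proof (cases "m \<le> n")
    case True
    have hn: "h \<in> H n" using Hmono[OF True] h by blast
    show ?thesis
    proof
      assume "x + h \<in> H n"
      then have "x + h + - h \<in> H n" using sg_add[OF Hsg] sg_minus[OF Hsg] hn by blast
      then show "x \<in> H n" by (simp add: add.assoc)
    next
      assume "x \<in> H n"
      then show "x + h \<in> H n" using sg_add[OF Hsg] hn by blast
    qed
  next
    case False
    then have nm: "H n \<subseteq> H m" using Hmono by simp
    have "x + h \<notin> H n"
    proof
      assume "x + h \<in> H n"
      then have "x + h \<in> H m" using nm by blast
      then have "x + h + - h \<in> H m" using sg_add[OF Hsg] sg_minus[OF Hsg] h by blast
      then show False using x by (simp add: add.assoc)
    qed
    then show ?thesis using x nm by blast
  qed
  define A where "A q = {x. \<exists>n. fst (prod_decode n) = q \<and> x \<in> H (Suc n) \<and> x \<notin> H n}" for q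
  have shell_uniq: "n = n'" if "x \<in> H (Suc n)" "x \<notin> H n" "x \<in> H (Suc n')" "x \<notin> H n'" for x n n'
  proof (rule ccontr)
    assume "n \<noteq> n'"
    then have "Suc n \<le> n' \<or> Suc n' \<le> n" by arith
    then show False using that Hmono by blast
  qed
  have dj: "ls_bounded (A q \<inter> A q')" if "q \<noteq> q'" for q q'
  proof -
    have "A q \<inter> A q' = {}" unfolding A_def using shell_uniq that by blast
    then show ?thesis by (simp add: bnd_empty)
  qed
  have nb: "\<not> ls_bounded (A q)" for q
  proof
    assume "ls_bounded (A q)"
    then obtain K where K: "compact K" "A q \<subseteq> K" unfolding ls_bounded_def by blast
    obtain m where m: "K \<subseteq> H m" using cpt_in[OF K(1)] by blast
    define n where "n = prod_encode (q, m)"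
    have "fst (prod_decode n) = q" unfolding n_def by simp
    then have "pt n \<in> A q" unfolding A_def using pt1 pt2 by blast
    moreover have "m \<le> n" unfolding n_def by (rule le_prod_encode_2)
    ultimately show False using K m Hmono pt2 by blast
  qed
  have memA: "u \<in> A q \<longleftrightarrow> x \<in> A q" if "\<forall>n. u \<in> H n \<longleftrightarrow> x \<in> H n" for u x q
    unfolding A_def using that by simp
  have cc: "coarsely_clopen (A q)" for q
    unfolding coarsely_clopen_def
  proof (intro allI impI)
    fix \<U> :: "'a set set" assume "unif_bounded_cover \<U>"
    then obtain B where B: "ls_bounded B" "\<forall>U\<in>\<U>. \<exists>g. U \<subseteq> ltrans g B"
      unfolding unif_bounded_cover_def by blast
    obtain KB where KB: "compact KB" "B \<subseteq> KB" using B(1) unfolding ls_bounded_def by blast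
    obtain m where m: "KB \<subseteq> H m" using cpt_in[OF KB(1)] by blast
    have BH: "B \<subseteq> H m" using KB m by blast
    have near: "\<forall>n. u \<in> H n \<longleftrightarrow> x \<in> H n" if as: "U \<in> \<U>" "x \<in> U" "u \<in> U" "x \<notin> H m" for U x u
    proof -
      obtain g where g: "U \<subseteq> ltrans g B" using B(2) as(1) by blast
      have "x \<in> ltrans g B" "u \<in> ltrans g B" using g as(2,3) by blast+
      then have "-g + x \<in> B" "-g + u \<in> B" by (simp_all add: mem_ltrans)
      then have "-g + x \<in> H m" "-g + u \<in> H m" using BH by blast+
      then have hh: "- (-g + x) + (-g + u) \<in> H m" using sg_add[OF Hsg] sg_minus[OF Hsg] by blast
      have eq: "x + (- (-g + x) + (-g + u)) = u"
        by (simp only: minus_add minus_minus add.assoc add_minus_cancel)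
      have "\<forall>n. x + (- (-g + x) + (-g + u)) \<in> H n \<longleftrightarrow> x \<in> H n" using same[OF as(4) hh] by blast
      then show ?thesis unfolding eq .
    qed
    have "star (A q) \<U> \<inter> star (- A q) \<U> \<subseteq> H m"
    proof
      fix x assume "x \<in> star (A q) \<U> \<inter> star (- A q) \<U>"
      then obtain U1 U2 u1 u2 where U: "U1 \<in> \<U>" "U2 \<in> \<U>" "x \<in> U1" "x \<in> U2"
        "u1 \<in> U1" "u1 \<in> A q" "u2 \<in> U2" "u2 \<notin> A q"
        unfolding star_def by blast
      show "x \<in> H m"
      proof (rule ccontr)
        assume xm: "x \<notin> H m"
        have "u1 \<in> A q \<longleftrightarrow> x \<in> A q" by (rule memA[OF near[OF U(1) U(3) U(5) xm]])
        moreover have "u2 \<in> A q \<longleftrightarrow> x \<in> A q" by (rule memA[OF near[OF U(2) U(4) U(7) xm]])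
        ultimately show False using U by blast
      qed
    qed
    then show "ls_bounded (star (A q) \<U> \<inter> star (- A q) \<U>)"
      using Hbnd[of m] by (rule bnd_subset[rotated])
  qed
  show ?thesis by (rule infinite_ends[OF cc nb dj])
qed


theorem corollary9p14:
  assumes "locally_compact_space (euclidean :: 'a::topological_group_add topology)"
    and "sigma_compact TYPE('a)"
    and "\<not> compactly_generated TYPE('a)"
  shows "card {E :: 'a set set. is_end E} = 1 \<or> infinite {E :: 'a set set. is_end E}"
proof -
  note lc = assms(1) and sig = assms(2) and ncg = assms(3)
  have "\<exists>U K. openin euclidean U \<and> compactin euclidean K \<and> (0::'a) \<in> U \<and> U \<subseteq> K"
    using lc unfolding locally_compact_space_def topspace_euclidean by (rule bspec) (rule UNIV_I)
  then obtain V K0 :: "'a set" where V0: "openin euclidean V" "compactin euclidean K0" "0 \<in> V" "V \<subseteq> K0"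
    by blast
  have Vo: "open V" using V0(1) by (simp only: open_openin)
  have K0: "compact K0" using V0(2) by (simp only: compactin_euclidean_iff)
  note V = V0
  show ?thesis
  proof (cases "\<forall>B. compact B \<longrightarrow> ls_bounded (generated_subgroup (K0 \<union> B))")
    case True
    have "infinite {E :: 'a set set. is_end E}" by (rule caseI[OF ncg Vo V(3,4) K0 sig True])
    then show ?thesis by (rule disjI2)
  next
    case False
    then obtain L0 :: "'a set" where L0: "compact L0" "\<not> ls_bounded (generated_subgroup (K0 \<union> L0))"
      by auto
    show ?thesis
    proof (cases "finite {E :: 'a set set. is_end E}")
      case False
      then show ?thesis by (rule disjI2)
    next
      case fin: True
      let ?S = "{E :: 'a set set. is_end E}"
      have "card ?S = 1"
      proof (rule ccontr)
        assume c1: "card ?S \<noteq> 1"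
        obtain E0 :: "'a set set" where E0: "is_end E0"
          using exists_end_UNIV[OF noncg_unbounded[OF ncg]] by blast
        have "\<exists>E1. is_end E1 \<and> E1 \<noteq> E0"
        proof (rule ccontr)
          assume ne: "\<not> (\<exists>E1. is_end E1 \<and> E1 \<noteq> E0)"
          have "?S = {E0}"
          proof (rule set_eqI)
            fix E :: "'a set set"
            show "E \<in> ?S \<longleftrightarrow> E \<in> {E0}"
            proof
              assume "E \<in> ?S"
              then have "is_end E" by simp
              then have "E = E0" using ne by blast
              then show "E \<in> {E0}" by simp
            next
              assume "E \<in> {E0}"
              then show "E \<in> ?S" using E0 by simp
            qed
          qed
          then show False using c1 by simp
        qed
        then obtain E1 where E1: "is_end E1" "E1 \<noteq> E0" by blast
        have "\<not> E0 \<subseteq> E1"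
        proof
          assume "E0 \<subseteq> E1"
          moreover have "end_family E1" using E1(1) unfolding is_end_def by blast
          ultimately have "E1 = E0" using E0 unfolding is_end_def by blast
          then show False using E1(2) by simp
        qed
        then obtain A where A: "A \<in> E0" "A \<notin> E1" by blast
        have ccA: "coarsely_clopen A" and nbA: "\<not> ls_bounded A"
          using E0 A(1) unfolding is_end_def end_family_def by blast+
        have nbC: "\<not> ls_bounded (- A)"
        proof
          assume bC: "ls_bounded (- A)"
          have "A \<in> E1"
          proof (rule absorb[OF E1(1) ccA nbA])
            fix F assume F: "F \<subseteq> E1" "finite F" "F \<noteq> {}"
            have ef: "end_family E1" using E1(1) unfolding is_end_def by blast
            have nbF: "\<not> ls_bounded (\<Inter>F)" using ef F unfolding end_family_def by blast
            show "\<not> ls_bounded (\<Inter>F \<inter> A)"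
            proof
              assume "ls_bounded (\<Inter>F \<inter> A)"
              then have "ls_bounded ((\<Inter>F \<inter> A) \<union> - A)" using bC by (rule bnd_Un)
              moreover have "\<Inter>F \<subseteq> (\<Inter>F \<inter> A) \<union> - A" by blast
              ultimately show False using nbF bnd_subset by blast
            qed
          qed
          then show False using A(2) by blast
        qed
        obtain T where T: "finite T" "\<forall>x. \<exists>t\<in>T. \<exists>s\<in>stab A. x = t + s"
          using finite_index[OF fin ccA] by blast
        have R: "finite (uminus ` T)" "\<forall>z. \<exists>n\<in>stab A. \<exists>r\<in>uminus ` T. z = n + r"
          using right_index[OF T] by blast+
        define L where "L = K0 \<union> L0 \<union> uminus ` T"
        have cL: "compact L" unfolding L_def using K0 L0(1) finite_imp_compact[OF R(1)] by (intro compact_Un)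
        have "generated_subgroup (K0 \<union> L0) \<subseteq> generated_subgroup L"
          unfolding L_def by (rule gs_mono) blast
        then have nbL: "\<not> ls_bounded (generated_subgroup L)" using L0(2) bnd_subset by blast
        have RL: "uminus ` T \<subseteq> L" unfolding L_def by blast
        show False by (rule caseII[OF ncg cL nbL ccA nbA nbC RL R(2)])
      qed
      then show ?thesis by (rule disjI1)
    qed
  qed
qed

end
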